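(* Let $p,q\geq 5$ be two distinct primes. Then there is no $(p+q)\times(p+q)$ circulant complex Hadamard matrix all of whose entries are $pq$-th roots of unity, i.e. $C^{circ}_{p+q}(pq)=\emptyset$.
   Context: A complex Hadamard matrix of order $n$ is a matrix $H\in M_n(\mathbb C)$ with $|H_{ij}|=1$ for all $i,j$ and pairwise orthogonal rows. A matrix $H=(H_{ij})_{i,j=0}^{n-1}$ is circulant if $H_{ij}$ depends only on $j-i$ modulo $n$. $C^{circ}_n(l)$ denotes the set of $n\times n$ circulant complex Hadamard matrices whose entries are all $l$-th roots of unity. *)

theory Defs
  imports Complex_Main "HOL-Computational_Algebra.Primes"
begin

text \<open>Matrices of order n are represented as functions nat => nat => complex,
  indexed by {0..<n}.\<close>

definition complex_hadamard :: "nat \<Rightarrow> (nat \<Rightarrow> nat \<Rightarrow> complex) \<Rightarrow> bool" where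
  "complex_hadamard n H \<longleftrightarrow>
     (\<forall>i<n. \<forall>j<n. cmod (H i j) = 1) \<and>
     (\<forall>i<n. \<forall>k<n. i \<noteq> k \<longrightarrow> (\<Sum>j<n. H i j * cnj (H k j)) = 0)"

definition circulant :: "nat \<Rightarrow> (nat \<Rightarrow> nat \<Rightarrow> complex) \<Rightarrow> bool" where
  "circulant n H \<longleftrightarrow>
     (\<forall>i<n. \<forall>j<n. \<forall>i'<n. \<forall>j'<n.
        (j + n - i) mod n = (j' + n - i') mod n \<longrightarrow> H i j = H i' j')"

definition circ_hadamard_roots :: "nat \<Rightarrow> nat \<Rightarrow> (nat \<Rightarrow> nat \<Rightarrow> complex) set" where
  "circ_hadamard_roots n l = {H. complex_hadamard n H \<and> circulant n H \<and>
      (\<forall>i<n. \<forall>j<n. H i j ^ l = 1)}"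

end

theory Submission
  imports Defs "HOL-Computational_Algebra.Polynomial_Factorial"
begin


lemma freshman:
  fixes x y :: "'a::comm_ring_1"
  assumes "prime l"
  shows "(of_nat l :: 'a) dvd ((x + y) ^ l - x ^ l - y ^ l)"
proof -
  have l0: "l > 0" using assms prime_gt_0_nat by blast
  have "(x + y) ^ l = (\<Sum>k\<le>l. of_nat (l choose k) * x ^ k * y ^ (l - k))"
    by (rule binomial_ring)
  also have "{..l} = insert l (insert 0 {1..<l})" using l0 by auto
  also have "(\<Sum>k\<in>insert l (insert 0 {1..<l}). of_nat (l choose k) * x ^ k * y ^ (l - k))
     = x ^ l + (y ^ l + (\<Sum>k\<in>{1..<l}. of_nat (l choose k) * x ^ k * y ^ (l - k)))"
    using l0 by (subst sum.insert; simp)+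
  finally have eq: "(x + y) ^ l - x ^ l - y ^ l = (\<Sum>k\<in>{1..<l}. of_nat (l choose k) * x ^ k * y ^ (l - k))"
    by (simp add: algebra_simps)
  have "(of_nat l :: 'a) dvd (\<Sum>k\<in>{1..<l}. of_nat (l choose k) * x ^ k * y ^ (l - k))"
  proof (rule dvd_sum)
    fix k assume "k \<in> {1..<l}"
    hence "l dvd (l choose k)" using assms l0 by (intro dvd_choose_prime) auto
    hence "(of_nat l :: 'a) dvd of_nat (l choose k)" by (metis dvd_def of_nat_mult)
    thus "(of_nat l :: 'a) dvd of_nat (l choose k) * x ^ k * y ^ (l - k)"
      by (simp add: mult.assoc)
  qed
  thus ?thesis using eq by simp
qed

lemma diff_dvd_power_diff:
  fixes x y :: "'a::comm_ring_1"
  shows "(x - y) dvd (x ^ n - y ^ n)"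
proof (induction n)
  case 0 thus ?case by simp
next
  case (Suc n)
  have "x ^ Suc n - y ^ Suc n = x * (x ^ n - y ^ n) + (x - y) * y ^ n"
    by (simp add: algebra_simps)
  thus ?case using Suc by (metis dvd_add dvd_mult dvd_triv_left)
qed

lemma fermat_nat_int:
  assumes "prime l"
  shows "int l dvd (int a) ^ l - int a"
proof (induction a)
  case 0 thus ?case using assms prime_gt_0_nat by (simp add: power_0_left)
next
  case (Suc a)
  have "int l dvd (int a + 1) ^ l - int a ^ l - 1 ^ l"
    using freshman[OF assms, of "int a" 1] by simp
  hence "int l dvd ((int a + 1) ^ l - int a ^ l - 1) + (int a ^ l - int a)"
    using Suc by (intro dvd_add) auto
  thus ?case by (simp add: algebra_simps)
qed

lemma fermat_int:
  fixes a :: int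
  assumes "prime l"
  shows "int l dvd a ^ l - a"
proof -
  define r where "r = a mod int l"
  have l0: "int l > 0" using assms prime_gt_0_nat by simp
  have r0: "r \<ge> 0" using l0 by (simp add: r_def)
  have "int l dvd a - r" by (simp add: r_def minus_mod_eq_mult_div)
  hence d1: "int l dvd a ^ l - r ^ l" by (meson dvd_trans diff_dvd_power_diff)
  have "int l dvd r ^ l - r" using fermat_nat_int[OF assms, of "nat r"] r0 by simp
  hence "int l dvd (a ^ l - r ^ l) + (r ^ l - r) - (a - r)"
    using d1 \<open>int l dvd a - r\<close> by (meson dvd_add dvd_diff)
  thus ?thesis by simp
qed



abbreviation ip :: "int poly \<Rightarrow> complex poly" where "ip \<equiv> map_poly of_int"

lemma ip_add: "ip (p + q) = ip p + ip q"
  by (intro poly_eqI) (simp add: coeff_map_poly)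
lemma ip_diff: "ip (p - q) = ip p - ip q"
  by (intro poly_eqI) (simp add: coeff_map_poly)
lemma ip_mult: "ip (p * q) = ip p * ip q"
  by (intro poly_eqI) (simp add: coeff_map_poly coeff_mult of_int_sum)
lemma ip_smult: "ip (smult c p) = smult (of_int c) (ip p)"
  by (intro poly_eqI) (simp add: coeff_map_poly)
lemma ip_monom: "ip (monom c n) = monom (of_int c) n"
  by (simp add: map_poly_monom)
lemma ip_const: "ip [:c:] = [:of_int c:]"
  by (simp add: map_poly_pCons)
lemma ip_1: "ip 1 = 1"
  by simp
lemma ip_pcompose: "ip (pcompose p q) = pcompose (ip p) (ip q)"
proof (induction p rule: pCons_induct)
  case 0 thus ?case by simp
next
  case (pCons a p)
  thus ?case by (simp add: pcompose_pCons ip_add ip_mult ip_const map_poly_pCons)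
qed

lemma ev_mult: "poly (ip (p * q)) z = poly (ip p) z * poly (ip q) z"
  by (simp add: ip_mult)

lemma minpoly_exists:
  fixes \<alpha> :: complex
  assumes P: "poly (ip P) \<alpha> = 0" "P \<noteq> 0"
  obtains g where "poly (ip g) \<alpha> = 0" "content g = 1" "degree g \<ge> 1"
    "\<And>f. poly (ip f) \<alpha> = 0 \<Longrightarrow> g dvd f"
proof -
  let ?S = "{h. h \<noteq> 0 \<and> poly (ip h) \<alpha> = 0}"
  define d where "d = (LEAST d. \<exists>h\<in>?S. degree h = d)"
  have ex: "\<exists>d. \<exists>h\<in>?S. degree h = d" using P by blast
  from LeastI_ex[OF ex] obtain h0 where h0: "h0 \<in> ?S" "degree h0 = d"
    unfolding d_def by blast
  have dmin: "d \<le> degree h" if "h \<in> ?S" for h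
    unfolding d_def by (rule Least_le) (use that in blast)
  define g where "g = primitive_part h0"
  have c0: "content h0 \<noteq> 0" using h0 by simp
  have "poly (ip h0) \<alpha> = of_int (content h0) * poly (ip g) \<alpha>"
    by (subst content_times_primitive_part[symmetric, of h0]) (simp only: g_def ip_smult poly_smult)
  hence g1: "poly (ip g) \<alpha> = 0" using h0 c0 by auto
  have g2: "content g = 1" using h0 by (simp add: g_def)
  have g0: "g \<noteq> 0" using g2 by auto
  have gd: "degree g = d" using h0 by (simp add: g_def)
  have g3: "degree g \<ge> 1"
  proof (rule ccontr)
    assume "\<not> degree g \<ge> 1"
    hence "degree g = 0" by simp
    then obtain c where "g = [:c:]" by (metis degree_eq_zeroE)
    with g1 g0 show False by (simp add: ip_const)
  qed
  have g4: "g dvd f" if f: "poly (ip f) \<alpha> = 0" for f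
  proof -
    obtain q r where qr: "pseudo_divmod f g = (q, r)" by (cases "pseudo_divmod f g") auto
    define c where "c = coeff g (degree g) ^ (Suc (degree f) - degree g)"
    have eq: "smult c f = g * q + r" and rd: "r = 0 \<or> degree r < degree g"
      using pseudo_divmod[OF g0 qr] by (simp_all add: c_def)
    have cnz: "c \<noteq> 0" using g0 by (simp add: c_def)
    have "poly (ip (smult c f)) \<alpha> = poly (ip (g * q + r)) \<alpha>" by (simp only: eq)
    hence "poly (ip r) \<alpha> = 0" using f g1 by (simp add: ip_smult ip_add ip_mult)
    hence r0: "r = 0" using rd dmin[of r] gd by force
    have "fract_poly f = fract_poly g * smult (inverse (to_fract c)) (fract_poly q)"
    proof -
      have "fract_poly (smult c f) = fract_poly (g * q)" using eq r0 by simp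
      hence "smult (to_fract c) (fract_poly f) = fract_poly g * fract_poly q" by simp
      hence "smult (inverse (to_fract c)) (smult (to_fract c) (fract_poly f))
          = smult (inverse (to_fract c)) (fract_poly g * fract_poly q)" by simp
      thus ?thesis using cnz by (simp add: mult_smult_right)
    qed
    hence "fract_poly g dvd fract_poly f" by (rule dvdI)
    thus "g dvd f" using g2 by (rule fract_poly_dvdD)
  qed
  show ?thesis using that g1 g2 g3 g4 by blast
qed



lemma frob_poly:
  fixes G :: "int poly"
  assumes l: "prime l"
  shows "(of_nat l :: int poly) dvd (G ^ l - pcompose G (monom 1 l))"
proof (induction G rule: pCons_induct)
  case 0
  have "l > 0" using l prime_gt_0_nat by blast
  thus ?case by (simp add: power_0_left)
next
  case (pCons a p)
  let ?L = "(of_nat l :: int poly)"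
  have X: "monom (1::int) l = [:0,1:] ^ l" by (simp add: monom_altdef)
  have e1: "pCons a p = [:a:] + [:0,1:] * p" by simp
  have d1: "?L dvd ([:a:] + [:0,1:] * p) ^ l - [:a:] ^ l - ([:0,1:] * p) ^ l"
    using freshman[OF l] by blast
  have "int l dvd a ^ l - a" by (rule fermat_int[OF l])
  then obtain t where "a ^ l - a = int l * t" by (auto elim: dvdE)
  hence "[:a:] ^ l - [:a:] = [:int l:] * [:t:]"
    by (simp add: poly_const_pow)
  hence d2: "?L dvd [:a:] ^ l - [:a:]" by (simp add: of_nat_poly)
  have d3: "?L dvd ([:0,1:] * p) ^ l - [:0,1:] ^ l * pcompose p (monom 1 l)"
  proof -
    have "([:0,1:] * p) ^ l - [:0,1:] ^ l * pcompose p (monom 1 l)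
       = [:0,1:] ^ l * (p ^ l - pcompose p (monom 1 l))"
      by (simp only: power_mult_distrib right_diff_distrib)
    thus ?thesis using pCons.IH by simp
  qed
  have "pCons a p ^ l - pcompose (pCons a p) (monom 1 l) =
     (([:a:] + [:0,1:] * p) ^ l - [:a:] ^ l - ([:0,1:] * p) ^ l) + ([:a:] ^ l - [:a:])
     + (([:0,1:] * p) ^ l - [:0,1:] ^ l * pcompose p (monom 1 l))"
    by (simp add: pcompose_pCons X algebra_simps)
  also have "?L dvd \<dots>" using d1 d2 d3 by (intro dvd_add)
  finally show ?case .
qed



lemma coeff_lemma:
  fixes g W :: "int poly"
  assumes l: "prime l" and lc: "lead_coeff g dvd 1" and dg: "degree g \<ge> 1"
  shows "[:int l:] dvd ([:c:] - g * W) \<Longrightarrow> [:int l:] dvd W"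
proof (induction "degree W" arbitrary: W rule: less_induct)
  case less
  show ?case
  proof (cases "W = 0")
    case True thus ?thesis by simp
  next
    case False
    have g0: "g \<noteq> 0" using dg by auto
    have "coeff ([:c:] - g * W) (degree g + degree W) = - (lead_coeff g * lead_coeff W)"
      using dg by (simp add: coeff_mult_degree_sum coeff_pCons split: nat.splits)
    moreover have "int l dvd coeff ([:c:] - g * W) (degree g + degree W)"
      using less.prems const_poly_dvd_iff by blast
    ultimately have "int l dvd lead_coeff g * lead_coeff W" by simp
    moreover obtain u where u: "1 = lead_coeff g * u" using lc unfolding dvd_def by blast
    ultimately have "int l dvd lead_coeff g * lead_coeff W * u" by simp
    hence dl: "int l dvd lead_coeff W" using u by (metis mult.assoc mult.commute mult.right_neutral)
    define W' where "W' = W - monom (lead_coeff W) (degree W)"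
    have dm: "[:int l:] dvd monom (lead_coeff W) (degree W)"
      using dl by (auto simp: const_poly_dvd_iff)
    have "[:int l:] dvd W'"
    proof (cases "W' = 0")
      case True thus ?thesis by simp
    next
      case False
      have "degree W' \<le> degree W" unfolding W'_def
        by (intro degree_diff_le) (auto simp: degree_monom_le)
      moreover have "coeff W' (degree W) = 0" by (simp add: W'_def)
      ultimately have lt: "degree W' < degree W" using False
        by (metis le_neq_implies_less leading_coeff_0_iff)
      have "[:c:] - g * W' = ([:c:] - g * W) + g * monom (lead_coeff W) (degree W)"
        by (simp add: W'_def algebra_simps)
      also have "[:int l:] dvd \<dots>" using less.prems dm by (intro dvd_add) auto
      finally show ?thesis using less.hyps[OF lt] by blast
    qed
    moreover have "W = W' + monom (lead_coeff W) (degree W)" by (simp add: W'_def)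
    ultimately show ?thesis using dm by (metis dvd_add)
  qed
qed

lemma coeff_lemma2:
  fixes g W :: "int poly"
  assumes l: "prime l" and lc: "lead_coeff g dvd 1" and dg: "degree g \<ge> 1"
    and d: "[:int l:] dvd ([:c:] - g * W)"
  shows "int l dvd c"
proof -
  have "[:int l:] dvd W" by (rule coeff_lemma[OF l lc dg d])
  hence "[:int l:] dvd ([:c:] - g * W) + g * W" using d by (intro dvd_add) auto
  thus ?thesis by simp
qed



lemma dedekind:
  fixes \<omega> :: complex and f :: "int poly"
  assumes m: "m > 0" and w: "\<omega> ^ m = 1" and l: "prime l" and lm: "\<not> l dvd m"
    and f: "poly (ip f) \<omega> = 0"
  shows "poly (ip f) (\<omega> ^ l) = 0"
proof (rule ccontr)
  assume nf: "poly (ip f) (\<omega> ^ l) \<noteq> 0"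
  define X :: "int poly" where "X = monom 1 m - 1"
  have evX: "poly (ip X) z = z ^ m - 1" for z
    by (simp add: X_def ip_diff ip_monom poly_monom)
  have X0: "X \<noteq> 0"
  proof
    assume "X = 0"
    hence "poly (ip X) 0 = 0" by simp
    thus False using evX[of 0] m by (simp add: power_0_left)
  qed
  have lcX: "lead_coeff X = 1"
  proof -
    have cX: "coeff X m = 1" using m by (simp add: X_def coeff_1)
    have "degree X = m"
    proof (rule antisym)
      show "degree X \<le> m" unfolding X_def by (intro degree_diff_le) (auto simp: degree_monom_le)
      show "m \<le> degree X" by (rule le_degree) (simp add: cX)
    qed
    thus ?thesis using cX by simp
  qed
  define \<beta> where "\<beta> = \<omega> ^ l"
  have b: "\<beta> ^ m = 1" by (metis \<beta>_def power_mult mult.commute power_one w)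
  obtain g where g1: "poly (ip g) \<omega> = 0" and g2: "content g = 1" and g3: "degree g \<ge> 1"
    and g4: "\<And>f. poly (ip f) \<omega> = 0 \<Longrightarrow> g dvd f"
    using minpoly_exists[of X \<omega>] evX w X0 by auto
  obtain G where G1: "poly (ip G) \<beta> = 0" and G4: "\<And>f. poly (ip f) \<beta> = 0 \<Longrightarrow> G dvd f"
  proof -
    have "poly (ip X) \<beta> = 0" using evX b by simp
    from minpoly_exists[OF this X0] show ?thesis using that by blast
  qed
  have gb: "poly (ip g) \<beta> \<noteq> 0"
  proof
    assume "poly (ip g) \<beta> = 0"
    from g4[OF f] obtain k where "f = g * k" by (auto elim: dvdE)
    hence "poly (ip f) \<beta> = 0" using \<open>poly (ip g) \<beta> = 0\<close> by (simp add: ev_mult)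
    thus False using nf by (simp add: \<beta>_def)
  qed
  obtain h where h: "X = g * h" using g4[of X] evX w by (auto elim: dvdE)
  have "poly (ip h) \<beta> = 0" using evX[of \<beta>] b gb by (simp add: h ev_mult)
  then obtain k where k: "h = G * k" using G4 by (auto elim: dvdE)
  have Xf: "X = g * (G * k)" using h k by simp
  have lcg: "lead_coeff g dvd 1"
    using lcX by (metis Xf dvd_triv_left lead_coeff_mult)
  define Gl where "Gl = pcompose G (monom 1 l)"
  have "poly (ip Gl) \<omega> = poly (ip G) \<beta>"
    by (simp add: Gl_def ip_pcompose poly_pcompose ip_monom poly_monom \<beta>_def)
  hence "poly (ip Gl) \<omega> = 0" using G1 by simp
  then obtain s where s: "Gl = g * s" using g4 by (auto elim: dvdE)
  have fr: "[:int l:] dvd (G ^ l - Gl)" using frob_poly[OF l, of G] by (simp add: Gl_def of_nat_poly)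
  have pdX: "pderiv X = monom (of_nat m) (m - 1)" by (simp add: X_def pderiv_diff pderiv_monom)
  have mid: "[:int m:] = monom 1 1 * pderiv X - [:int m:] * X"
  proof -
    have "monom (1::int) 1 * monom (of_nat m) (m - 1) = monom (int m) m"
      using m by (simp add: mult_monom)
    moreover have "[:int m:] * X = monom (int m) m - [:int m:]"
      by (simp add: X_def right_diff_distrib smult_monom)
    ultimately show ?thesis by (simp add: pdX)
  qed
  define A where "A = monom 1 1 * pderiv (G * k) - [:int m:] * (G * k)"
  define B where "B = monom 1 1 * pderiv g * k"
  have AB: "[:int m:] = g * A + G * B"
  proof -
    have e: "pderiv X = g * pderiv (G * k) + (G * k) * pderiv g" unfolding Xf by (rule pderiv_mult)
    have "[:int m:] = monom 1 1 * (g * pderiv (G * k) + (G * k) * pderiv g) - [:int m:] * (g * (G * k))"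
      using mid[unfolded e, unfolded Xf] .
    thus ?thesis unfolding A_def B_def by algebra
  qed
  have d1: "g dvd [:int m:] ^ l - (G * B) ^ l"
  proof -
    have "(g * A + G * B) - G * B dvd (g * A + G * B) ^ l - (G * B) ^ l"
      by (rule diff_dvd_power_diff)
    thus ?thesis by (simp add: AB) (metis dvd_mult_left)
  qed
  obtain E where E: "G ^ l - Gl = [:int l:] * E" using fr by (auto elim: dvdE)
  have "(G * B) ^ l = g * (s * B ^ l) + [:int l:] * (E * B ^ l)"
  proof -
    have "G ^ l = g * s + [:int l:] * E" using E s by (metis diff_eq_eq add.commute)
    thus ?thesis by (simp add: power_mult_distrib ring_distribs mult_ac)
  qed
  with d1 have "g dvd [:int m:] ^ l - g * (s * B ^ l) - [:int l:] * (E * B ^ l)"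
    by (simp add: algebra_simps)
  hence "g dvd ([:int m:] ^ l - g * (s * B ^ l) - [:int l:] * (E * B ^ l)) + g * (s * B ^ l)"
    by (intro dvd_add) auto
  hence "g dvd [:int m:] ^ l - [:int l:] * (E * B ^ l)" by simp
  then obtain W where W: "[:int m:] ^ l - [:int l:] * (E * B ^ l) = g * W" by (auto elim: dvdE)
  have "[:int m ^ l:] - g * W = [:int l:] * (E * B ^ l)"
    using W by (simp add: poly_const_pow algebra_simps)
  hence "[:int l:] dvd [:int m ^ l:] - g * W" by (metis dvd_triv_left)
  hence "int l dvd int m ^ l" by (rule coeff_lemma2[OF l lcg g3])
  hence "l dvd m ^ l" by (metis of_nat_dvd_iff of_nat_power)
  hence "l dvd m" using l prime_dvd_power by blast
  thus False using lm by simp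
qed



lemma conj_all:
  fixes \<omega> :: complex and f :: "int poly"
  assumes m: "m > 0" and w: "\<omega> ^ m = 1" and f: "poly (ip f) \<omega> = 0"
  shows "coprime a m \<Longrightarrow> poly (ip f) (\<omega> ^ a) = 0"
proof (induction a rule: less_induct)
  case (less a)
  show ?case
  proof (cases "a \<le> 1")
    case True
    show ?thesis
    proof (cases "a = 0")
      case True
      with less.prems have "m = 1" by simp
      with w have "\<omega> = 1" by simp
      thus ?thesis using f True by simp
    next
      case False
      with True have "a = 1" by simp
      thus ?thesis using f by simp
    qed
  next
    case False
    then obtain l where l: "prime l" "l dvd a" using prime_factor_nat[of a] by auto
    then obtain b where ab: "a = l * b" by (auto elim: dvdE)
    have "l > 1" using l prime_gt_1_nat by blast
    hence "b < a" using False ab by (cases "b = 0") auto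
    have cb: "coprime b m" using less.prems ab by simp
    have lm: "\<not> l dvd m"
    proof
      assume "l dvd m"
      hence "l dvd gcd a m" using l by simp
      thus False using less.prems l by (simp add: prime_gt_1_nat)
    qed
    have "poly (ip f) (\<omega> ^ b) = 0" using less.IH[OF \<open>b < a\<close> cb] .
    moreover have "(\<omega> ^ b) ^ m = 1" by (metis power_mult mult.commute power_one w)
    ultimately have "poly (ip f) ((\<omega> ^ b) ^ l) = 0" using dedekind[OF m _ l(1) lm] by blast
    thus ?thesis by (simp add: ab power_mult[symmetric] mult.commute)
  qed
qed

lemma geom_unity:
  fixes w :: complex
  assumes "w ^ k = 1" "k > 0"
  shows "(\<Sum>b<k. w ^ b) = (if w = 1 then of_nat k else 0)"
proof (cases "w = 1")
  case True thus ?thesis by simp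
next
  case False
  thus ?thesis using assms by (simp add: geometric_sum)
qed

lemma zeta_pow_eq_1:
  assumes m: "m > 0"
  shows "cis (2 * pi / real m) ^ r = 1 \<longleftrightarrow> m dvd r"
proof
  assume "cis (2 * pi / real m) ^ r = 1"
  hence "cis (2 * pi * real r / real m) = 1" by (simp add: DeMoivre mult.commute)
  hence "cos (2 * pi * real r / real m) = 1" by (simp add: complex_eq_iff)
  then obtain n :: int where "2 * pi * real r / real m = real_of_int n * 2 * pi"
    by (subst (asm) cos_one_2pi_int) blast
  hence "real r = real_of_int n * real m" using m by (simp add: field_simps)
  hence "int r = n * int m" by (metis of_int_eq_iff of_int_mult of_int_of_nat_eq)
  hence "int m dvd int r" by simp
  thus "m dvd r" by simp
next
  assume "m dvd r"
  then obtain k where "r = m * k" by (auto elim: dvdE)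
  have "cis (2 * pi / real m) ^ m = cis (2 * pi)" using m by (simp add: DeMoivre)
  also have "\<dots> = 1" by (simp add: complex_eq_iff)
  finally show "cis (2 * pi / real m) ^ r = 1" by (simp add: \<open>r = m * k\<close> power_mult)
qed

lemma root_is_zeta_pow:
  fixes z :: complex
  assumes m: "m > 0" and z: "z ^ m = 1"
  shows "\<exists>k<m. z = cis (2 * pi / real m) ^ k"
proof -
  have "z \<in> (\<lambda>k. cis (2 * pi * real k / real m)) ` {..<m}"
    using bij_betw_roots_unity[OF m] z unfolding bij_betw_def by auto
  then obtain k where "k < m" "z = cis (2 * pi * real k / real m)" by auto
  moreover have "cis (2 * pi * real k / real m) = cis (2 * pi / real m) ^ k"
    by (simp add: DeMoivre mult.commute)
  ultimately show ?thesis by auto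
qed



lemma modd:
  fixes x z k m :: nat
  assumes "k dvd m" "z \<le> m"
  shows "k dvd (x + (m - z)) \<longleftrightarrow> x mod k = z mod k"
proof -
  have "int (x + (m - z)) = int x + int m - int z" using assms(2) by simp
  hence "k dvd (x + (m - z)) \<longleftrightarrow> int k dvd int x + int m - int z" by (metis of_nat_dvd_iff)
  also have "\<dots> \<longleftrightarrow> int k dvd int x - int z"
  proof -
    have "int k dvd int m" using assms(1) by simp
    thus ?thesis by (metis add_diff_cancel_left' diff_diff_eq2 diff_add_eq dvd_add_left_iff add.commute)
  qed
  also have "\<dots> \<longleftrightarrow> int x mod int k = int z mod int k" by (simp add: mod_eq_dvd_iff)
  also have "\<dots> \<longleftrightarrow> x mod k = z mod k" by (metis of_nat_eq_iff of_nat_mod)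
  finally show ?thesis .
qed

lemma partsum:
  fixes k k' n z :: nat and d :: "nat \<Rightarrow> nat"
  assumes k: "k > 0" "k' > 0" and z: "z < k * k'"
  defines "\<zeta> \<equiv> cis (2 * pi / real (k * k'))"
  shows "(\<Sum>b<k'. (\<Sum>j<n. \<zeta> ^ ((k * b) * d j)) * \<zeta> ^ ((k * b) * (k * k' - z)))
       = of_nat k' * of_nat (card {j\<in>{..<n}. d j mod k' = z mod k'})"
proof -
  define m where "m = k * k'"
  have m: "m > 0" using k by (simp add: m_def)
  have "(\<Sum>b<k'. (\<Sum>j<n. \<zeta> ^ ((k * b) * d j)) * \<zeta> ^ ((k * b) * (m - z)))
      = (\<Sum>b<k'. \<Sum>j<n. (\<zeta> ^ (k * (d j + (m - z)))) ^ b)"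
  proof (intro sum.cong refl)
    fix b assume "b \<in> {..<k'}"
    have "(\<Sum>j<n. \<zeta> ^ ((k * b) * d j)) * \<zeta> ^ ((k * b) * (m - z))
        = (\<Sum>j<n. \<zeta> ^ ((k * b) * d j) * \<zeta> ^ ((k * b) * (m - z)))" by (rule sum_distrib_right)
    also have "\<dots> = (\<Sum>j<n. (\<zeta> ^ (k * (d j + (m - z)))) ^ b)"
    proof (intro sum.cong refl)
      fix j
      have e: "(k * b) * d j + (k * b) * (m - z) = (k * (d j + (m - z))) * b"
        by (simp add: algebra_simps)
      show "\<zeta> ^ ((k * b) * d j) * \<zeta> ^ ((k * b) * (m - z)) = (\<zeta> ^ (k * (d j + (m - z)))) ^ b"
        by (metis power_add power_mult e)
    qed
    finally show "(\<Sum>j<n. \<zeta> ^ ((k * b) * d j)) * \<zeta> ^ ((k * b) * (m - z))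
        = (\<Sum>j<n. (\<zeta> ^ (k * (d j + (m - z)))) ^ b)" .
  qed
  also have "\<dots> = (\<Sum>j<n. \<Sum>b<k'. (\<zeta> ^ (k * (d j + (m - z)))) ^ b)"
    by (rule sum.swap)
  also have "\<dots> = (\<Sum>j<n. if d j mod k' = z mod k' then of_nat k' else 0)"
  proof (intro sum.cong refl)
    fix j
    define x where "x = d j + (m - z)"
    have zm: "\<zeta> = cis (2 * pi / real m)" by (simp add: \<zeta>_def m_def)
    have "(\<zeta> ^ (k * x)) ^ k' = \<zeta> ^ (m * x)" by (simp add: m_def power_mult[symmetric] mult_ac)
    also have "\<dots> = 1" unfolding zm using m by (subst zeta_pow_eq_1) auto
    finally have w1: "(\<zeta> ^ (k * x)) ^ k' = 1" .
    have "\<zeta> ^ (k * x) = 1 \<longleftrightarrow> m dvd k * x" unfolding zm using m by (rule zeta_pow_eq_1)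
    also have "\<dots> \<longleftrightarrow> k' dvd x" using k by (simp add: m_def)
    also have "\<dots> \<longleftrightarrow> d j mod k' = z mod k'" unfolding x_def
      by (rule modd) (use z in \<open>auto simp: m_def\<close>)
    finally have "\<zeta> ^ (k * x) = 1 \<longleftrightarrow> d j mod k' = z mod k'" .
    thus "(\<Sum>b<k'. (\<zeta> ^ (k * (d j + (m - z)))) ^ b) = (if d j mod k' = z mod k' then of_nat k' else 0)"
      using geom_unity[OF w1 k(2)] by (simp add: x_def)
  qed
  also have "\<dots> = of_nat k' * of_nat (card {j\<in>{..<n}. d j mod k' = z mod k'})"
    by (simp add: sum.inter_filter[symmetric])
  finally show ?thesis by (simp add: m_def)
qed



lemma sum_mult_reindex:
  fixes h :: "nat \<Rightarrow> complex"
  assumes p: "p > 0"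
  shows "(\<Sum>a<p*q. if p dvd a then h a else 0) = (\<Sum>b<q. h (p * b))"
proof -
  have "(\<Sum>a<p*q. if p dvd a then h a else 0) = sum h {a\<in>{..<p*q}. p dvd a}"
    by (rule sum.inter_filter[symmetric]) simp
  also have "{a\<in>{..<p*q}. p dvd a} = (\<lambda>b. p * b) ` {..<q}"
  proof safe
    fix a assume "a < p * q" "p dvd a"
    then obtain b where "a = p * b" by (auto elim: dvdE)
    with \<open>a < p * q\<close> p show "a \<in> (\<lambda>b. p * b) ` {..<q}" by auto
  next
    fix b assume "b < q" thus "p * b < p * q" using p by simp
  qed auto
  also have "sum h ((\<lambda>b. p * b) ` {..<q}) = (\<Sum>b<q. h (p * b))"
    using p by (subst sum.reindex) (auto simp: inj_on_def)
  finally show ?thesis .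
qed

lemma fourier:
  fixes p q n z :: nat and d :: "nat \<Rightarrow> nat"
  assumes pq: "prime p" "prime q" "p \<noteq> q"
  and van: "\<And>a. coprime a (p*q) \<Longrightarrow> (\<Sum>j<n. cis (2*pi/real(p*q)) ^ (a * d j)) = 0"
  and z: "z < p*q"
  shows "p*q * card {j\<in>{..<n}. d j mod (p*q) = z} + n
       = q * card {j\<in>{..<n}. d j mod q = z mod q} + p * card {j\<in>{..<n}. d j mod p = z mod p}"
proof -
  define m where "m = p * q"
  define \<zeta> where "\<zeta> = cis (2*pi/real(p*q))"
  define g where "g a = (\<Sum>j<n. \<zeta> ^ (a * d j)) * \<zeta> ^ (a * (m - z))" for a
  have p0: "p > 0" and q0: "q > 0" using pq prime_gt_0_nat by auto
  have m0: "m > 0" using p0 q0 by (simp add: m_def)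
  have cpq: "coprime p q" using pq by (simp add: primes_coprime)
  define c where "c = card {j\<in>{..<n}. d j mod m = z}"
  define Cq where "Cq = card {j\<in>{..<n}. d j mod q = z mod q}"
  define Cp where "Cp = card {j\<in>{..<n}. d j mod p = z mod p}"
  have S1: "(\<Sum>a<m. g a) = of_nat m * of_nat c"
    using partsum[where k=1 and k'=m and z=z and n=n and d=d] m0 z
    by (simp add: g_def \<zeta>_def m_def c_def)
  have S2: "(\<Sum>b<q. g (p * b)) = of_nat q * of_nat Cq"
    using partsum[where k=p and k'=q and z=z and n=n and d=d] p0 q0 z
    by (simp add: g_def \<zeta>_def m_def Cq_def)
  have S3: "(\<Sum>b<p. g (q * b)) = of_nat p * of_nat Cp"
    using partsum[where k=q and k'=p and z=z and n=n and d=d] p0 q0 z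
    by (simp add: g_def \<zeta>_def m_def Cp_def mult.commute)
  have pw: "g a = (if p dvd a then g a else 0) + (if q dvd a then g a else 0) - (if a = 0 then g a else 0)"
    if a: "a \<in> {..<m}" for a
  proof (cases "p dvd a \<or> q dvd a")
    case False
    have "coprime a p" using False pq(1) by (metis prime_imp_coprime coprime_commute)
    moreover have "coprime a q" using False pq(2) by (metis prime_imp_coprime coprime_commute)
    ultimately have "coprime a (p*q)" by simp
    hence "(\<Sum>j<n. \<zeta> ^ (a * d j)) = 0" using van by (simp add: \<zeta>_def)
    thus ?thesis using False by (auto simp: g_def)
  next
    case True
    show ?thesis
    proof (cases "p dvd a \<and> q dvd a")
      case True
      hence "p * q dvd a" using cpq by (simp add: divides_mult)
      hence "a = 0" using a by (auto simp: m_def dest: dvd_imp_le)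
      thus ?thesis by simp
    next
      case False
      hence "a \<noteq> 0" by (metis dvd_0_right)
      thus ?thesis using False \<open>p dvd a \<or> q dvd a\<close> by auto
    qed
  qed
  have "(\<Sum>a<m. g a) = (\<Sum>a<m. (if p dvd a then g a else 0) + (if q dvd a then g a else 0) - (if a = 0 then g a else 0))"
    using pw by (intro sum.cong refl) blast
  also have "\<dots> = (\<Sum>a<m. if p dvd a then g a else 0) + (\<Sum>a<m. if q dvd a then g a else 0) - (\<Sum>a<m. if a = 0 then g a else 0)"
    by (simp add: sum.distrib sum_subtractf)
  also have "(\<Sum>a<m. if p dvd a then g a else 0) = (\<Sum>b<q. g (p * b))"
    unfolding m_def by (rule sum_mult_reindex[OF p0])
  also have "(\<Sum>a<m. if q dvd a then g a else 0) = (\<Sum>b<p. g (q * b))"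
    unfolding m_def by (subst mult.commute) (rule sum_mult_reindex[OF q0])
  also have "(\<Sum>a<m. if a = 0 then g a else 0) = g 0" using m0 by (simp add: sum.delta)
  also have "g 0 = of_nat n" by (simp add: g_def)
  finally have "of_nat m * of_nat c = of_nat q * of_nat Cq + of_nat p * of_nat Cp - (of_nat n :: complex)"
    using S1 S2 S3 by simp
  hence "(of_nat (m * c + n) :: complex) = of_nat (q * Cq + p * Cp)" by (simp add: algebra_simps)
  hence "m * c + n = q * Cq + p * Cp" by (rule of_nat_eq_iff[THEN iffD1])
  thus ?thesis by (simp add: m_def c_def Cq_def Cp_def)
qed



lemma card_filter_sum:
  "card {j\<in>{..<n::nat}. P j} = (\<Sum>j<n. if P j then 1 else (0::nat))"
proof -
  have "sum (\<lambda>_. 1::nat) {j\<in>{..<n}. P j} = (\<Sum>j<n. if P j then 1 else (0::nat))"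
    by (rule sum.inter_filter) simp
  thus ?thesis by simp
qed

lemma sum_counts:
  fixes d :: "nat \<Rightarrow> nat"
  assumes r: "r > 0"
  shows "(\<Sum>s<r. card {j\<in>{..<n}. d j mod r = s}) = n"
proof -
  have "(\<Sum>s<r. card {j\<in>{..<n}. d j mod r = s}) = (\<Sum>s<r. \<Sum>j<n. if d j mod r = s then 1 else (0::nat))"
    unfolding card_filter_sum ..
  also have "\<dots> = (\<Sum>j<n. \<Sum>s<r. if d j mod r = s then 1 else (0::nat))" by (rule sum.swap)
  also have "\<dots> = (\<Sum>j<n. 1)" using r by (intro sum.cong refl) (simp add: sum.delta)
  finally show ?thesis by simp
qed

lemma sum_residues:
  fixes d :: "nat \<Rightarrow> nat"
  assumes r: "r > 0"
  shows "(\<Sum>j<n. d j mod r) = (\<Sum>s<r. s * card {j\<in>{..<n}. d j mod r = s})"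
proof -
  have "(\<Sum>s<r. s * card {j\<in>{..<n}. d j mod r = s}) = (\<Sum>s<r. \<Sum>j<n. if d j mod r = s then s else (0::nat))"
    unfolding card_filter_sum by (simp add: sum_distrib_left) (auto intro!: sum.cong)
  also have "\<dots> = (\<Sum>j<n. \<Sum>s<r. if d j mod r = s then s else (0::nat))" by (rule sum.swap)
  also have "\<dots> = (\<Sum>j<n. d j mod r)" using r by (intro sum.cong refl) (simp add: sum.delta)
  finally show ?thesis by simp
qed

lemma sum_one_unique:
  fixes K :: "nat \<Rightarrow> nat"
  assumes "finite A" "sum K A = 1"
  shows "\<exists>s0\<in>A. K s0 = 1 \<and> (\<forall>s\<in>A. s \<noteq> s0 \<longrightarrow> K s = 0)"
proof -
  from assms obtain s0 where s0: "s0 \<in> A" "K s0 \<noteq> 0"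
    by (metis one_neq_zero sum.neutral)
  have "sum K A = K s0 + sum K (A - {s0})" using assms(1) s0(1) by (simp add: sum.remove)
  hence "K s0 = 1" "sum K (A - {s0}) = 0" using assms(2) s0(2) by linarith+
  hence "\<forall>s\<in>A. s \<noteq> s0 \<longrightarrow> K s = 0" using assms(1) by simp
  thus ?thesis using s0 \<open>K s0 = 1\<close> by blast
qed

lemma side:
  fixes r u n :: nat and d :: "nat \<Rightarrow> nat"
  assumes r: "prime r" "odd r" and u: "prime u" "r \<noteq> u" and n: "n = r + u"
  and cong: "\<And>s. s < r \<Longrightarrow> card {j\<in>{..<n}. d j mod r = s} mod u = 1"
  and sdvd: "r dvd (\<Sum>j<n. d j)"
  shows "\<And>s. s < r \<Longrightarrow> card {j\<in>{..<n}. d j mod r = s} = (if s = 0 then u + 1 else 1)"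
proof -
  define C where "C s = card {j\<in>{..<n}. d j mod r = s}" for s
  have r0: "r > 0" and u1: "u > 1" using r u prime_gt_1_nat prime_gt_0_nat by auto
  define K where "K s = C s div u" for s
  have CK: "C s = u * K s + 1" if "s < r" for s
    using cong[OF that] by (metis C_def K_def div_mult_mod_eq mult.commute)
  have "n = (\<Sum>s<r. C s)" using sum_counts[OF r0, where d=d and n=n] by (simp add: C_def)
  also have "\<dots> = (\<Sum>s<r. u * K s + 1)" by (intro sum.cong refl) (simp add: CK)
  also have "\<dots> = u * (\<Sum>s<r. K s) + r" unfolding sum.distrib sum_distrib_left by simp
  finally have "u * (\<Sum>s<r. K s) = u" using n by linarith
  hence "(\<Sum>s<r. K s) = 1" using u1 by auto
  then obtain s0 where s0: "s0 < r" "K s0 = 1" "\<forall>s<r. s \<noteq> s0 \<longrightarrow> K s = 0"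
    using sum_one_unique[of "{..<r}" K] by auto
  have Cs: "C s = (if s = s0 then u + 1 else 1)" if "s < r" for s
    using CK[OF that] s0 that by auto
  have "(\<Sum>j<n. d j mod r) = (\<Sum>s<r. s * C s)" using sum_residues[OF r0] by (simp add: C_def)
  also have "\<dots> = (\<Sum>s<r. s + (if s = s0 then u * s else 0))"
    by (intro sum.cong refl) (simp add: Cs algebra_simps)
  also have "\<dots> = (\<Sum>s<r. s) + u * s0" using s0(1) by (simp add: sum.distrib sum.delta)
  finally have e1: "(\<Sum>j<n. d j mod r) = (\<Sum>s<r. s) + u * s0" .
  obtain t where t: "r = 2 * t + 1" using r(2) oddE by blast
  have "(\<Sum>s<r. s) = r * (r - 1) div 2" using Sum_Ico_nat[of 0 r] by (simp add: lessThan_atLeast0)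
  also have "\<dots> = r * t" using t by simp
  finally have e2: "(\<Sum>s<r. s) = r * t" .
  have "r dvd (\<Sum>j<n. d j mod r)"
    using sdvd by (metis mod_sum_eq dvd_eq_mod_eq_0)
  hence "r dvd r * t + u * s0" using e1 e2 by simp
  hence "r dvd u * s0" by (simp add: dvd_add_right_iff)
  moreover have "coprime r u" using r u by (simp add: primes_coprime)
  ultimately have "r dvd s0" by (simp add: coprime_dvd_mult_right_iff)
  hence "s0 = 0" using s0(1) by (auto dest: dvd_imp_le)
  thus "\<And>s. s < r \<Longrightarrow> card {j\<in>{..<n}. d j mod r = s} = (if s = 0 then u + 1 else 1)"
    using Cs by (simp add: C_def)
qed



lemma cancel_mod:
  fixes p q C X Y :: nat
  assumes "prime p" "prime q" "p \<noteq> q" and e: "q * C + p * X = p * Y + p + q"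
  shows "C mod p = 1"
proof -
  have p1: "p > 1" using assms prime_gt_1_nat by blast
  have "int q * (int C - 1) = int p * (int Y + 1 - int X)"
    using arg_cong[OF e, of int] by (simp add: algebra_simps)
  hence "int p dvd int q * (int C - 1)" by (metis dvd_triv_left)
  moreover have "coprime (int p) (int q)" using assms by (simp add: primes_coprime)
  ultimately have "int p dvd int C - 1" by (metis coprime_dvd_mult_right_iff mult.commute)
  hence "int C mod int p = 1 mod int p" by (simp add: mod_eq_dvd_iff)
  also have "\<dots> = 1" using p1 by simp
  finally show ?thesis by (metis of_nat_1 of_nat_eq_iff of_nat_mod)
qed

lemma cross:
  fixes p q n :: nat and d :: "nat \<Rightarrow> nat"
  assumes pq: "prime p" "prime q" "p \<noteq> q" "odd p" "odd q" and n: "n = p + q"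
  and van: "\<And>a. coprime a (p*q) \<Longrightarrow> (\<Sum>j<n. cis (2*pi/real(p*q)) ^ (a * d j)) = 0"
  and sdvd: "(p*q) dvd (\<Sum>j<n. d j)"
  shows "\<forall>j<n. p dvd d j \<or> q dvd d j" "\<exists>j<n. \<not> p dvd d j" "\<exists>j<n. \<not> q dvd d j"
proof -
  have p1: "p > 1" and q1: "q > 1" using pq prime_gt_1_nat by auto
  define c where "c z = card {j\<in>{..<n}. d j mod (p*q) = z}" for z
  define Cq where "Cq s = card {j\<in>{..<n}. d j mod q = s}" for s
  define Cp where "Cp s = card {j\<in>{..<n}. d j mod p = s}" for s
  have four: "p*q * c z + n = q * Cq (z mod q) + p * Cp (z mod p)" if "z < p*q" for z
    using fourier[OF pq(1-3) van that] by (simp add: c_def Cq_def Cp_def)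
  have congq: "Cq s mod p = 1" if s: "s < q" for s
  proof -
    have "q \<le> p * q" using p1 by simp
    hence "s < p * q" using s by linarith
    from four[OF this] have "q * Cq s + p * Cp (s mod p) = p * (q * c s) + p + q"
      using s n by (simp add: algebra_simps)
    thus ?thesis by (rule cancel_mod[OF pq(1-3)])
  qed
  have congp: "Cp s mod q = 1" if s: "s < p" for s
  proof -
    have "p \<le> p * q" using q1 by simp
    hence "s < p * q" using s by linarith
    from four[OF this] have "p * Cp s + q * Cq (s mod q) = q * (p * c s) + q + p"
      using s n by (simp add: algebra_simps)
    thus ?thesis by (rule cancel_mod[OF pq(2) pq(1) pq(3)[symmetric]])
  qed
  have sq: "q dvd (\<Sum>j<n. d j)" using sdvd by (metis dvd_mult_right)
  have sp: "p dvd (\<Sum>j<n. d j)" using sdvd by (metis dvd_mult_left)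
  have nq: "n = q + p" using n by simp
  have cq': "\<And>s. s < q \<Longrightarrow> card {j\<in>{..<n}. d j mod q = s} mod p = 1"
    using congq unfolding Cq_def .
  have cp': "\<And>s. s < p \<Longrightarrow> card {j\<in>{..<n}. d j mod p = s} mod q = 1"
    using congp unfolding Cp_def .
  have Cqv: "Cq s = (if s = 0 then p + 1 else 1)" if "s < q" for s
    using side[OF pq(2) pq(5) pq(1) pq(3)[symmetric] nq cq' sq that] unfolding Cq_def .
  have Cpv: "Cp s = (if s = 0 then q + 1 else 1)" if "s < p" for s
    using side[OF pq(1) pq(4) pq(2) pq(3) n cp' sp that] unfolding Cp_def .
  show "\<forall>j<n. p dvd d j \<or> q dvd d j"
  proof (intro allI impI, rule ccontr)
    fix j assume j: "j < n" and nd: "\<not> (p dvd d j \<or> q dvd d j)"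
    define z where "z = d j mod (p * q)"
    have zpq: "z < p * q" using p1 q1 by (simp add: z_def)
    have zp: "z mod p = d j mod p" by (simp add: z_def mod_mod_cancel)
    have zq: "z mod q = d j mod q" by (simp add: z_def mod_mod_cancel)
    have "z mod p \<noteq> 0" "z mod q \<noteq> 0" using nd zp zq by (auto simp: dvd_eq_mod_eq_0)
    hence "Cp (z mod p) = 1" "Cq (z mod q) = 1" using Cpv Cqv p1 q1 by auto
    with four[OF zpq] n p1 q1 have "c z = 0" by simp
    moreover have "j \<in> {j\<in>{..<n}. d j mod (p*q) = z}" using j by (simp add: z_def)
    moreover have "finite {j\<in>{..<n}. d j mod (p*q) = z}" by simp
    ultimately show False unfolding c_def by (simp only: card_0_eq) blast
  qed
  have "Cp 1 = 1" using Cpv p1 by simp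
  hence "{j\<in>{..<n}. d j mod p = 1} \<noteq> {}" unfolding Cp_def by (metis card.empty zero_neq_one)
  then obtain j where "j < n" "d j mod p = 1" by blast
  thus "\<exists>j<n. \<not> p dvd d j" using p1 by (auto simp: dvd_eq_mod_eq_0)
  have "Cq 1 = 1" using Cqv q1 by simp
  hence "{j\<in>{..<n}. d j mod q = 1} \<noteq> {}" unfolding Cq_def by (metis card.empty zero_neq_one)
  then obtain j where "j < n" "d j mod q = 1" by blast
  thus "\<exists>j<n. \<not> q dvd d j" using q1 by (auto simp: dvd_eq_mod_eq_0)
qed



lemma shift_exists:
  fixes j j' n :: nat
  assumes "j < n" "j' < n" "j \<noteq> j'"
  shows "0 < (j + n - j') mod n \<and> (j + n - j') mod n < n \<and> (j + n - (j + n - j') mod n) mod n = j'"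
proof (cases "j' < j")
  case True
  have e1: "j + n - j' = (j - j') + n" using True by simp
  have lt1: "j - j' < n" using assms by linarith
  have k: "(j + n - j') mod n = j - j'" unfolding e1 mod_add_self2 using lt1 by (rule mod_less)
  have e2: "j + n - (j - j') = j' + n" using True assms by simp
  have "(j' + n) mod n = j'" unfolding mod_add_self2 using assms(2) by (rule mod_less)
  thus ?thesis using k e2 True lt1 by simp
next
  case False
  hence lt: "j < j'" using assms by simp
  have lt2: "j + n - j' < n" using lt assms by linarith
  have k: "(j + n - j') mod n = j + n - j'" using lt2 by (rule mod_less)
  have e: "j + n - (j + n - j') = j'" using lt assms by simp
  have "j' mod n = j'" using assms(2) by (rule mod_less)
  moreover have "j' < j + n" using assms by linarith
  ultimately show ?thesis using k e lt2 lt by simp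
qed

lemma shift_bij:
  fixes n k :: nat
  assumes "k < n"
  shows "bij_betw (\<lambda>j. (j + n - k) mod n) {..<n} {..<n}"
proof (rule bij_betw_byWitness[where f' = "\<lambda>j. (j + k) mod n"])
  show "(\<lambda>j. (j + n - k) mod n) ` {..<n} \<subseteq> {..<n}" using assms by auto
  show "(\<lambda>j. (j + k) mod n) ` {..<n} \<subseteq> {..<n}" using assms by auto
  show "\<forall>x\<in>{..<n}. ((x + n - k) mod n + k) mod n = x"
  proof
    fix x assume x: "x \<in> {..<n}"
    have "((x + n - k) mod n + k) mod n = (x + n - k + k) mod n" by (simp add: mod_add_left_eq)
    also have "x + n - k + k = x + n" using assms by simp
    finally show "((x + n - k) mod n + k) mod n = x" using x by simp
  qed
  show "\<forall>y\<in>{..<n}. ((y + k) mod n + n - k) mod n = y"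
  proof
    fix y assume y: "y \<in> {..<n}"
    have "((y + k) mod n + n - k) mod n = ((y + k) mod n + (n - k)) mod n" using assms by simp
    also have "\<dots> = (y + k + (n - k)) mod n" by (simp add: mod_add_left_eq)
    also have "y + k + (n - k) = y + n" using assms by simp
    finally show "((y + k) mod n + n - k) mod n = y" using y by simp
  qed
qed

lemma ip_sum_monom: "poly (ip (\<Sum>j<(n::nat). monom 1 ((d::nat\<Rightarrow>nat) j))) z = (\<Sum>j<n. z ^ d j)"
  by (induction n) (simp_all add: ip_add ip_monom poly_monom)

theorem theorem1p3:
  fixes p q :: nat
  assumes "prime p" "prime q" "p \<ge> 5" "q \<ge> 5" "p \<noteq> q"
  shows "circ_hadamard_roots (p + q) (p * q) = {}"
proof (rule equals0I)
  fix H assume "H \<in> circ_hadamard_roots (p + q) (p * q)"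
  define n where "n = p + q"
  define m where "m = p * q"
  define \<zeta> where "\<zeta> = cis (2 * pi / real (p * q))"
  have hd: "complex_hadamard n H" and ci: "circulant n H" and rt: "\<forall>i<n. \<forall>j<n. H i j ^ m = 1"
    using \<open>H \<in> _\<close> by (auto simp: circ_hadamard_roots_def n_def m_def)
  have pq: "prime p" "prime q" "p \<noteq> q" using assms by auto
  have oddp: "odd p" and oddq: "odd q" using assms prime_odd_nat by auto
  have n1: "1 < n" using assms by (simp add: n_def)
  have m0: "m > 0" using assms by (simp add: m_def)
  have zm: "\<zeta> = cis (2 * pi / real m)" by (simp add: \<zeta>_def m_def)
  have zeta_m: "\<zeta> ^ m = 1" unfolding zm using m0 by (subst zeta_pow_eq_1) auto
  have "\<forall>j. \<exists>k. j < n \<longrightarrow> k < m \<and> H 0 j = \<zeta> ^ k"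
  proof
    fix j show "\<exists>k. j < n \<longrightarrow> k < m \<and> H 0 j = \<zeta> ^ k"
    proof (cases "j < n")
      case True
      hence "H 0 j ^ m = 1" using rt n1 by auto
      from root_is_zeta_pow[OF m0 this] show ?thesis unfolding zm by auto
    next
      case False thus ?thesis by auto
    qed
  qed
  from choice[OF this] obtain e where e': "\<forall>j. j < n \<longrightarrow> e j < m \<and> H 0 j = \<zeta> ^ e j" by blast
  hence e: "\<And>j. j < n \<Longrightarrow> e j < m \<and> H 0 j = \<zeta> ^ e j" by blast
  have circ: "H i j = H 0 ((j + n - i) mod n)" if "i < n" "j < n" for i j
  proof -
    have eq: "(j + n - i) mod n = ((j + n - i) mod n + n - 0) mod n" by simp
    have c: "\<forall>i<n. \<forall>j<n. \<forall>i'<n. \<forall>j'<n. (j + n - i) mod n = (j' + n - i') mod n \<longrightarrow> H i j = H i' j'"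
      using ci unfolding circulant_def .
    have "0 < n" "(j + n - i) mod n < n" using n1 by auto
    from c[rule_format, OF that this(1) this(2) eq] show ?thesis .
  qed
  have cnjz: "cnj (\<zeta> ^ x) = \<zeta> ^ (m - x)" if "x \<le> m" for x
  proof -
    have n1: "norm (\<zeta> ^ x) = 1" by (simp add: \<zeta>_def norm_power)
    have "cnj (\<zeta> ^ x) * \<zeta> ^ x = 1"
      using n1 by (metis complex_norm_square mult.commute of_real_1 power_one)
    moreover have "\<zeta> ^ (m - x) * \<zeta> ^ x = 1" using that zeta_m by (simp flip: power_add)
    moreover have "\<zeta> ^ x \<noteq> 0" by (metis n1 norm_zero zero_neq_one)
    ultimately show ?thesis by (metis mult_right_cancel)
  qed
  define \<sigma> where "\<sigma> k j = (j + n - k) mod n" for k j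
  define d where "d k j = e j + (m - e (\<sigma> k j))" for k j
  have \<sigma>n: "\<sigma> k j < n" for k j using n1 by (simp add: \<sigma>_def)
  have props: "(\<forall>j<n. p dvd d k j \<or> q dvd d k j) \<and> (\<exists>j<n. \<not> p dvd d k j) \<and> (\<exists>j<n. \<not> q dvd d k j)"
    if k: "0 < k" "k < n" for k
  proof -
    have "(\<Sum>j<n. H 0 j * cnj (H k j)) = 0" using hd k unfolding complex_hadamard_def by auto
    also have "(\<Sum>j<n. H 0 j * cnj (H k j)) = (\<Sum>j<n. \<zeta> ^ d k j)"
    proof (intro sum.cong refl)
      fix j assume "j \<in> {..<n}"
      hence j: "j < n" by simp
      have "H k j = \<zeta> ^ e (\<sigma> k j)" using circ[OF k(2) j] e \<sigma>n by (simp add: \<sigma>_def)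
      hence "cnj (H k j) = \<zeta> ^ (m - e (\<sigma> k j))" using cnjz e \<sigma>n by (simp add: less_imp_le)
      thus "H 0 j * cnj (H k j) = \<zeta> ^ d k j" using e[OF j] by (simp add: d_def power_add)
    qed
    finally have v0: "poly (ip (\<Sum>j<n. monom 1 (d k j))) \<zeta> = 0" by (simp add: ip_sum_monom)
    have van: "(\<Sum>j<n. cis (2*pi/real(p*q)) ^ (a * d k j)) = 0" if "coprime a (p*q)" for a
    proof -
      have "poly (ip (\<Sum>j<n. monom 1 (d k j))) (\<zeta> ^ a) = 0"
        using conj_all[OF m0 zeta_m v0] that by (simp add: m_def)
      thus ?thesis by (simp add: ip_sum_monom \<zeta>_def power_mult[symmetric])
    qed
    have "(\<Sum>j<n. d k j) = (\<Sum>j<n. e j) + (\<Sum>j<n. m - e (\<sigma> k j))"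
      by (simp add: d_def sum.distrib)
    also have "(\<Sum>j<n. m - e (\<sigma> k j)) = (\<Sum>j<n. m - e j)"
      using sum.reindex_bij_betw[OF shift_bij[OF k(2)], of "\<lambda>j. m - e j"] by (simp add: \<sigma>_def)
    also have "(\<Sum>j<n. e j) + (\<Sum>j<n. m - e j) = (\<Sum>j<n. m)"
      by (simp add: sum.distrib[symmetric] e less_imp_le)
    finally have "(\<Sum>j<n. d k j) = n * m" by simp
    hence sdvd: "(p*q) dvd (\<Sum>j<n. d k j)" by (simp add: m_def)
    show ?thesis using cross[OF pq oddp oddq n_def van sdvd] by blast
  qed
  define X where "X j = e j mod p" for j
  define Y where "Y j = e j mod q" for j
  have dvdX: "p dvd d k j \<longleftrightarrow> X j = X (\<sigma> k j)" if "j < n" for k j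
    unfolding d_def X_def using e[OF \<sigma>n[of k j]] by (intro modd) (auto simp: m_def less_imp_le)
  have dvdY: "q dvd d k j \<longleftrightarrow> Y j = Y (\<sigma> k j)" if "j < n" for k j
    unfolding d_def Y_def using e[OF \<sigma>n[of k j]] by (intro modd) (auto simp: m_def less_imp_le)
  have pair: "X j = X j' \<or> Y j = Y j'" if "j < n" "j' < n" for j j'
  proof (cases "j = j'")
    case True thus ?thesis by simp
  next
    case False
    define k where "k = (j + n - j') mod n"
    have k: "0 < k" "k < n" "\<sigma> k j = j'"
      using shift_exists[OF that False] by (simp_all add: k_def \<sigma>_def)
    have "p dvd d k j \<or> q dvd d k j" using props[OF k(1,2)] that by blast
    thus ?thesis using dvdX[OF that(1)] dvdY[OF that(1)] k(3) by auto
  qed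
  obtain j1 where j1: "j1 < n" "\<not> p dvd d 1 j1" using props[of 1] n1 by auto
  obtain j2 where j2: "j2 < n" "\<not> q dvd d 1 j2" using props[of 1] n1 by auto
  have A: "X j1 \<noteq> X (\<sigma> 1 j1)" using dvdX[OF j1(1)] j1 by simp
  have B: "Y j2 \<noteq> Y (\<sigma> 1 j2)" using dvdY[OF j2(1)] j2 by simp
  have a1: "Y j1 = Y (\<sigma> 1 j1)" using pair[OF j1(1) \<sigma>n] A by blast
  have b1: "X j2 = X (\<sigma> 1 j2)" using pair[OF j2(1) \<sigma>n] B by blast
  have c1: "Y j2 = Y j1"
    using pair[OF j2(1) j1(1)] pair[OF j2(1) \<sigma>n[of 1 j1]] A a1 by metis
  have c2: "Y (\<sigma> 1 j2) = Y j1"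
    using pair[OF \<sigma>n[of 1 j2] j1(1)] pair[OF \<sigma>n[of 1 j2] \<sigma>n[of 1 j1]] A a1 by metis
  show False using B c1 c2 by simp
qed


end
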